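(* Let $p\ge5$ be prime and let $H\le{\rm AGL}(1,p)$ consist of all maps $x\mapsto ax+b$ with $a$ a nonzero quadratic residue modulo $p$ and $b\in\mathbb F_p$. Then $H\wr S_2$, in the product action on $\mathbb F_p^2$, is a primitive group of degree $p^2$ all of whose elements are imprimitive permutations, and it contains the normal subgroup $H\times H$ of index $2$, which is imprimitive.
   Context: For $H\le{\rm Sym}(\Delta)$, $H\wr S_2$ in product action acts on $\Delta^2$ by applying elements of $H$ coordinatewise and possibly swapping the two coordinates. A permutation of a set $\Omega$ of size $n$ is imprimitive if it preserves a partition of $\Omega$ into blocks of equal size $m$ with $1<m<n$; a transitive group is imprimitive if it preserves such a partition. *)

theory Defs
  imports "HOL-Number_Theory.Number_Theory" "HOL-Algebra.Algebra" "HOL-Library.Disjoint_Sets"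
begin

definition Fp :: "int \<Rightarrow> int set" where
  "Fp p = {0..<p}"

definition Omega :: "int \<Rightarrow> (int \<times> int) set" where
  "Omega p = Fp p \<times> Fp p"

definition Hmaps :: "int \<Rightarrow> (int \<Rightarrow> int) set" where
  "Hmaps p = {(\<lambda>x. (a * x + b) mod p) | a b.
      a \<in> {1..p-1} \<and> QuadRes p a \<and> b \<in> Fp p}"

text \<open>Permutations of Omega are extended by the identity outside Omega.\<close>
definition coordwise :: "int \<Rightarrow> (int \<Rightarrow> int) \<Rightarrow> (int \<Rightarrow> int) \<Rightarrow> (int \<times> int \<Rightarrow> int \<times> int)" where
  "coordwise p h1 h2 = (\<lambda>(x, y). if (x, y) \<in> Omega p then (h1 x, h2 y) else (x, y))"

definition swapped :: "int \<Rightarrow> (int \<Rightarrow> int) \<Rightarrow> (int \<Rightarrow> int) \<Rightarrow> (int \<times> int \<Rightarrow> int \<times> int)" where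
  "swapped p h1 h2 = (\<lambda>(x, y). if (x, y) \<in> Omega p then (h1 y, h2 x) else (x, y))"

definition base_group :: "int \<Rightarrow> (int \<times> int \<Rightarrow> int \<times> int) set" where
  "base_group p = {coordwise p h1 h2 | h1 h2. h1 \<in> Hmaps p \<and> h2 \<in> Hmaps p}"

definition wreath_group :: "int \<Rightarrow> (int \<times> int \<Rightarrow> int \<times> int) set" where
  "wreath_group p = base_group p \<union> {swapped p h1 h2 | h1 h2. h1 \<in> Hmaps p \<and> h2 \<in> Hmaps p}"

definition perm_grp :: "('a \<Rightarrow> 'a) set \<Rightarrow> ('a \<Rightarrow> 'a) monoid" where
  "perm_grp S = \<lparr>carrier = S, mult = (\<circ>), one = id\<rparr>"

definition block_system :: "'a set \<Rightarrow> 'a set set \<Rightarrow> nat \<Rightarrow> bool" where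
  "block_system \<Omega> P m \<longleftrightarrow> partition_on \<Omega> P \<and> (\<forall>B\<in>P. card B = m) \<and> 1 < m \<and> m < card \<Omega>"

definition preserves :: "('a \<Rightarrow> 'a) \<Rightarrow> 'a set set \<Rightarrow> bool" where
  "preserves g P \<longleftrightarrow> (\<forall>B\<in>P. g ` B \<in> P)"

definition imprimitive_perm :: "'a set \<Rightarrow> ('a \<Rightarrow> 'a) \<Rightarrow> bool" where
  "imprimitive_perm \<Omega> g \<longleftrightarrow> (\<exists>P m. block_system \<Omega> P m \<and> preserves g P)"

definition transitive_on :: "'a set \<Rightarrow> ('a \<Rightarrow> 'a) set \<Rightarrow> bool" where
  "transitive_on \<Omega> G \<longleftrightarrow> (\<forall>x\<in>\<Omega>. \<forall>y\<in>\<Omega>. \<exists>g\<in>G. g x = y)"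

definition imprimitive_group :: "'a set \<Rightarrow> ('a \<Rightarrow> 'a) set \<Rightarrow> bool" where
  "imprimitive_group \<Omega> G \<longleftrightarrow> transitive_on \<Omega> G \<and>
     (\<exists>P m. block_system \<Omega> P m \<and> (\<forall>g\<in>G. preserves g P))"

definition primitive_group :: "'a set \<Rightarrow> ('a \<Rightarrow> 'a) set \<Rightarrow> bool" where
  "primitive_group \<Omega> G \<longleftrightarrow> transitive_on \<Omega> G \<and>
     \<not> (\<exists>P m. block_system \<Omega> P m \<and> (\<forall>g\<in>G. preserves g P))"

end

theory Submission
  imports Defs
begin

definition hm :: "int \<Rightarrow> int \<Rightarrow> int \<Rightarrow> int \<Rightarrow> int" where
  "hm p a b = (\<lambda>x. (a*x+b) mod p)"

lemma Hmaps_hm: "Hmaps p = {hm p a b | a b. a \<in> {1..p-1} \<and> QuadRes p a \<and> b \<in> Fp p}"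
  unfolding Hmaps_def hm_def by simp

locale setting =
  fixes p :: int
  assumes prime_p: "Factorial_Ring.prime p" and p5: "p \<ge> 5"
begin

lemma p_pos: "p > 1" using p5 by simp

lemma hm_cong:
  assumes "[a = a'] (mod p)" "[b = b'] (mod p)"
  shows "hm p a b = hm p a' b'"
proof (rule ext)
  fix x
  have "(a*x) mod p = (a'*x) mod p"
    using assms(1) unfolding cong_def by (rule mod_mult_cong) simp
  then show "hm p a b x = hm p a' b' x"
    unfolding hm_def using assms(2) unfolding cong_def by (intro mod_add_cong)
qed

lemma hm_comp: "hm p a b \<circ> hm p u v = hm p (a*u) (a*v+b)"
proof (rule ext)
  fix x
  have "(a * ((u*x+v) mod p) + b) mod p = (a*(u*x+v) + b) mod p"
    by (metis mod_add_left_eq mod_mult_right_eq)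
  then show "(hm p a b \<circ> hm p u v) x = hm p (a*u) (a*v+b) x"
    by (simp add: hm_def algebra_simps)
qed

lemma QR_mult: "QuadRes p a \<Longrightarrow> QuadRes p u \<Longrightarrow> QuadRes p (a*u)"
  unfolding QuadRes_def
proof (elim exE)
  fix y z assume "[y^2 = a] (mod p)" "[z^2 = u] (mod p)"
  then have "[y^2*z^2 = a*u] (mod p)" by (rule cong_mult)
  then show "\<exists>w. [w^2 = a*u] (mod p)" by (metis power_mult_distrib)
qed

lemma QR_cong: "[a = a'] (mod p) \<Longrightarrow> QuadRes p a \<Longrightarrow> QuadRes p a'"
  unfolding QuadRes_def using cong_trans by blast

lemma hm_in:
  assumes "\<not> p dvd a" "QuadRes p a"
  shows "hm p a b \<in> Hmaps p"
proof -
  have c1: "[a = a mod p] (mod p)" "[b = b mod p] (mod p)" by (simp_all add: cong_def)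
  have "a mod p \<noteq> 0" using assms(1) by (simp add: dvd_eq_mod_eq_0)
  moreover have "a mod p \<ge> 0" "a mod p < p" "b mod p \<ge> 0" "b mod p < p" using p_pos by auto
  ultimately have "a mod p \<in> {1..p-1}" "b mod p \<in> Fp p" by (auto simp: Fp_def)
  moreover have "QuadRes p (a mod p)" using QR_cong[OF c1(1) assms(2)] .
  moreover have "hm p a b = hm p (a mod p) (b mod p)" using hm_cong[OF c1] .
  ultimately show ?thesis unfolding Hmaps_hm by blast
qed

lemma Hmaps_E:
  assumes "h \<in> Hmaps p"
  obtains a b where "h = hm p a b" "\<not> p dvd a" "QuadRes p a"
proof -
  from assms obtain a b where h: "h = hm p a b" "a \<in> {1..p-1}" "QuadRes p a"
    unfolding Hmaps_hm by blast
  have "\<not> p dvd a" using h(2) zdvd_not_zless[of a p] by auto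
  then show ?thesis using that h by blast
qed

lemma Hmaps_comp: "h \<in> Hmaps p \<Longrightarrow> k \<in> Hmaps p \<Longrightarrow> h \<circ> k \<in> Hmaps p"
proof -
  assume "h \<in> Hmaps p" "k \<in> Hmaps p"
  then obtain a b u v where "h = hm p a b" "\<not> p dvd a" "QuadRes p a"
     "k = hm p u v" "\<not> p dvd u" "QuadRes p u" by (metis Hmaps_E)
  moreover have "\<not> p dvd a*u" using prime_p calculation by (simp add: prime_dvd_mult_iff)
  ultimately show ?thesis using hm_comp hm_in QR_mult by metis
qed

abbreviation E where "E \<equiv> hm p 1 0"

lemma E_in: "E \<in> Hmaps p"
proof (rule hm_in)
  show "\<not> p dvd 1" using p_pos by (simp add: zdvd_not_zless)
  show "QuadRes p 1" unfolding QuadRes_def by (rule exI[of _ 1]) simp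
qed

lemma E_left: "h \<in> Hmaps p \<Longrightarrow> E \<circ> h = h"
  by (metis Hmaps_E hm_comp mult_1 add_0_right)

lemma E_right: "h \<in> Hmaps p \<Longrightarrow> h \<circ> E = h"
  by (metis Hmaps_E hm_comp mult_1_right mult_zero_right add_0)

lemma hm_range: "hm p a b x \<in> Fp p"
  using p_pos by (simp add: hm_def Fp_def)

lemma Hmaps_range: "h \<in> Hmaps p \<Longrightarrow> h x \<in> Fp p"
  by (metis Hmaps_E hm_range)

lemma E_id: "x \<in> Fp p \<Longrightarrow> E x = x"
  by (simp add: hm_def Fp_def)

lemma Hmaps_inv:
  assumes "h \<in> Hmaps p"
  shows "\<exists>h'\<in>Hmaps p. h' \<circ> h = E \<and> h \<circ> h' = E"
proof -
  obtain a b where h: "h = hm p a b" "\<not> p dvd a" "QuadRes p a" using assms Hmaps_E by metis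
  have "coprime a p" using prime_imp_coprime[OF prime_p h(2)] by (simp add: coprime_commute)
  then obtain x where x: "[a*x = 1] (mod p)" using cong_solve_coprime_int by blast
  then have dx: "p dvd a*x - 1" by (simp add: cong_iff_dvd_diff)
  have nx: "\<not> p dvd x"
  proof
    assume "p dvd x"
    then have "p dvd a*x" by simp
    have "p dvd a*x - (a*x - 1)" using dvd_diff[OF \<open>p dvd a*x\<close> dx] .
    then have "p dvd 1" by simp
    then show False using p_pos by (simp add: zdvd_not_zless)
  qed
  obtain y where y: "[y^2 = a] (mod p)" using h(3) unfolding QuadRes_def by blast
  then have dy: "p dvd y^2 - a" by (simp add: cong_iff_dvd_diff)
  have "(x*y)^2 - x = x^2*(y^2 - a) + x*(a*x - 1)" by (simp add: algebra_simps power2_eq_square)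
  then have "p dvd (x*y)^2 - x" using dx dy by simp
  then have qx: "QuadRes p x" unfolding QuadRes_def cong_iff_dvd_diff by blast
  have c1: "[x*a = 1] (mod p)" using x by (simp add: mult.commute)
  have c2: "[x*b + -x*b = 0] (mod p)" by simp
  have "b - a*x*b = - (b * (a*x - 1))" by (simp add: algebra_simps)
  then have "p dvd b - a*x*b" using dx by (metis dvd_minus_iff dvd_mult)
  then have c3: "[a*(-x*b) + b = 0] (mod p)" by (simp add: cong_iff_dvd_diff algebra_simps)
  have "hm p x (-x*b) \<circ> h = E" unfolding h hm_comp using hm_cong[OF c1 c2] .
  moreover have "h \<circ> hm p x (-x*b) = E" unfolding h hm_comp using hm_cong[OF x c3] .
  moreover have "hm p x (-x*b) \<in> Hmaps p" using hm_in nx qx by blast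
  ultimately show ?thesis by blast
qed

abbreviation Sw where "Sw \<equiv> {swapped p h1 h2 | h1 h2. h1 \<in> Hmaps p \<and> h2 \<in> Hmaps p}"

lemma W_eq: "wreath_group p = base_group p \<union> Sw"
  by (simp add: wreath_group_def)

lemma cw_in: "h1 \<in> Hmaps p \<Longrightarrow> h2 \<in> Hmaps p \<Longrightarrow> coordwise p h1 h2 \<in> base_group p"
  unfolding base_group_def by blast

lemma sw_in: "h1 \<in> Hmaps p \<Longrightarrow> h2 \<in> Hmaps p \<Longrightarrow> swapped p h1 h2 \<in> Sw"
  by blast

lemma base_E:
  assumes "g \<in> base_group p"
  obtains h1 h2 where "h1 \<in> Hmaps p" "h2 \<in> Hmaps p" "g = coordwise p h1 h2"
  using assms unfolding base_group_def by blast

lemma Sw_E: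
  assumes "g \<in> Sw"
  obtains h1 h2 where "h1 \<in> Hmaps p" "h2 \<in> Hmaps p" "g = swapped p h1 h2"
  using assms by blast

lemma cw_cw: "k1 \<in> Hmaps p \<Longrightarrow> k2 \<in> Hmaps p \<Longrightarrow>
   coordwise p h1 h2 \<circ> coordwise p k1 k2 = coordwise p (h1 \<circ> k1) (h2 \<circ> k2)"
proof (rule ext)
  fix z assume "k1 \<in> Hmaps p" "k2 \<in> Hmaps p"
  then show "(coordwise p h1 h2 \<circ> coordwise p k1 k2) z = coordwise p (h1 \<circ> k1) (h2 \<circ> k2) z"
    by (cases z) (auto simp: coordwise_def Omega_def Hmaps_range)
qed

lemma cw_sw: "k1 \<in> Hmaps p \<Longrightarrow> k2 \<in> Hmaps p \<Longrightarrow>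
   coordwise p h1 h2 \<circ> swapped p k1 k2 = swapped p (h1 \<circ> k1) (h2 \<circ> k2)"
proof (rule ext)
  fix z assume "k1 \<in> Hmaps p" "k2 \<in> Hmaps p"
  then show "(coordwise p h1 h2 \<circ> swapped p k1 k2) z = swapped p (h1 \<circ> k1) (h2 \<circ> k2) z"
    by (cases z) (auto simp: coordwise_def swapped_def Omega_def Hmaps_range)
qed

lemma sw_cw: "h1 \<in> Hmaps p \<Longrightarrow> h2 \<in> Hmaps p \<Longrightarrow>
   swapped p k1 k2 \<circ> coordwise p h1 h2 = swapped p (k1 \<circ> h2) (k2 \<circ> h1)"
proof (rule ext)
  fix z assume "h1 \<in> Hmaps p" "h2 \<in> Hmaps p"
  then show "(swapped p k1 k2 \<circ> coordwise p h1 h2) z = swapped p (k1 \<circ> h2) (k2 \<circ> h1) z"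
    by (cases z) (auto simp: coordwise_def swapped_def Omega_def Hmaps_range)
qed

lemma sw_sw: "k1 \<in> Hmaps p \<Longrightarrow> k2 \<in> Hmaps p \<Longrightarrow>
   swapped p h1 h2 \<circ> swapped p k1 k2 = coordwise p (h1 \<circ> k2) (h2 \<circ> k1)"
proof (rule ext)
  fix z assume "k1 \<in> Hmaps p" "k2 \<in> Hmaps p"
  then show "(swapped p h1 h2 \<circ> swapped p k1 k2) z = coordwise p (h1 \<circ> k2) (h2 \<circ> k1) z"
    by (cases z) (auto simp: coordwise_def swapped_def Omega_def Hmaps_range)
qed

lemma cw_id: "coordwise p E E = id"
proof (rule ext)
  fix z show "coordwise p E E z = id z"
    by (cases z) (auto simp: coordwise_def Omega_def E_id)
qed

lemma id_base: "id \<in> base_group p"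
  using cw_in[OF E_in E_in] cw_id by simp

lemma base_closed: "x \<in> base_group p \<Longrightarrow> y \<in> base_group p \<Longrightarrow> x \<circ> y \<in> base_group p"
  by (elim base_E) (simp add: cw_cw cw_in Hmaps_comp)

lemma W_closed: "x \<in> wreath_group p \<Longrightarrow> y \<in> wreath_group p \<Longrightarrow> x \<circ> y \<in> wreath_group p"
  unfolding W_eq
proof (elim UnE)
  assume "x \<in> base_group p" "y \<in> base_group p"
  then show "x \<circ> y \<in> base_group p \<union> Sw" using base_closed by blast
next
  assume x: "x \<in> base_group p" and y: "y \<in> Sw"
  obtain h1 h2 where h: "h1 \<in> Hmaps p" "h2 \<in> Hmaps p" "x = coordwise p h1 h2" using x by (rule base_E)
  obtain k1 k2 where k: "k1 \<in> Hmaps p" "k2 \<in> Hmaps p" "y = swapped p k1 k2" using y by (rule Sw_E)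
  have "x \<circ> y = swapped p (h1\<circ>k1) (h2\<circ>k2)" using h k by (simp add: cw_sw)
  then show "x \<circ> y \<in> base_group p \<union> Sw"
    using sw_in[OF Hmaps_comp[OF h(1) k(1)] Hmaps_comp[OF h(2) k(2)]] by (rule ssubst[where P="\<lambda>z. z \<in> _ \<union> _", OF _ UnI2])
next
  assume x: "x \<in> Sw" and y: "y \<in> base_group p"
  obtain h1 h2 where h: "h1 \<in> Hmaps p" "h2 \<in> Hmaps p" "y = coordwise p h1 h2" using y by (rule base_E)
  obtain k1 k2 where k: "k1 \<in> Hmaps p" "k2 \<in> Hmaps p" "x = swapped p k1 k2" using x by (rule Sw_E)
  have "x \<circ> y = swapped p (k1\<circ>h2) (k2\<circ>h1)" using h k by (simp add: sw_cw)
  then show "x \<circ> y \<in> base_group p \<union> Sw"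
    using sw_in[OF Hmaps_comp[OF k(1) h(2)] Hmaps_comp[OF k(2) h(1)]] by (rule ssubst[where P="\<lambda>z. z \<in> _ \<union> _", OF _ UnI2])
next
  assume x: "x \<in> Sw" and y: "y \<in> Sw"
  obtain h1 h2 where h: "h1 \<in> Hmaps p" "h2 \<in> Hmaps p" "x = swapped p h1 h2" using x by (rule Sw_E)
  obtain k1 k2 where k: "k1 \<in> Hmaps p" "k2 \<in> Hmaps p" "y = swapped p k1 k2" using y by (rule Sw_E)
  have "x \<circ> y = coordwise p (h1\<circ>k2) (h2\<circ>k1)" using h k by (simp add: sw_sw)
  then show "x \<circ> y \<in> base_group p \<union> Sw"
    using cw_in[OF Hmaps_comp[OF h(1) k(2)] Hmaps_comp[OF h(2) k(1)]] by (rule ssubst[where P="\<lambda>z. z \<in> _ \<union> _", OF _ UnI1])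
qed

lemma base_inv: "x \<in> base_group p \<Longrightarrow> \<exists>y\<in>base_group p. y \<circ> x = id \<and> x \<circ> y = id"
proof -
  assume "x \<in> base_group p"
  then obtain h1 h2 where h: "h1 \<in> Hmaps p" "h2 \<in> Hmaps p" "x = coordwise p h1 h2" by (rule base_E)
  obtain k1 where k1: "k1 \<in> Hmaps p" "k1 \<circ> h1 = E" "h1 \<circ> k1 = E" using Hmaps_inv[OF h(1)] by blast
  obtain k2 where k2: "k2 \<in> Hmaps p" "k2 \<circ> h2 = E" "h2 \<circ> k2 = E" using Hmaps_inv[OF h(2)] by blast
  have "coordwise p k1 k2 \<circ> x = id" using h k1 k2 cw_cw cw_id by simp
  moreover have "x \<circ> coordwise p k1 k2 = id" using h k1 k2 cw_cw cw_id by simp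
  ultimately show ?thesis using cw_in[OF k1(1) k2(1)] by blast
qed

lemma W_inv: "x \<in> wreath_group p \<Longrightarrow> \<exists>y\<in>wreath_group p. y \<circ> x = id \<and> x \<circ> y = id"
proof -
  assume "x \<in> wreath_group p"
  then consider "x \<in> base_group p" | "x \<in> Sw" unfolding W_eq by blast
  then show ?thesis
  proof cases
    case 1 then show ?thesis using base_inv unfolding W_eq by blast
  next
    case 2
    then obtain h1 h2 where h: "h1 \<in> Hmaps p" "h2 \<in> Hmaps p" "x = swapped p h1 h2" by (rule Sw_E)
    obtain k1 where k1: "k1 \<in> Hmaps p" "k1 \<circ> h1 = E" "h1 \<circ> k1 = E" using Hmaps_inv[OF h(1)] by blast
    obtain k2 where k2: "k2 \<in> Hmaps p" "k2 \<circ> h2 = E" "h2 \<circ> k2 = E" using Hmaps_inv[OF h(2)] by blast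
    have "swapped p k2 k1 \<circ> x = id" using h k1 k2 sw_sw cw_id by simp
    moreover have "x \<circ> swapped p k2 k1 = id" using h k1 k2 sw_sw cw_id by simp
    ultimately show ?thesis using sw_in[OF k2(1) k1(1)] unfolding W_eq by blast
  qed
qed

lemma id_W: "id \<in> wreath_group p" using id_base W_eq by simp

lemma group_W: "group (perm_grp (wreath_group p))"
  by (rule groupI) (auto simp: perm_grp_def W_closed id_W o_assoc dest: W_inv)

lemma base_sub_W: "base_group p \<subseteq> wreath_group p" unfolding W_eq by (rule Un_upper1)

lemma subgroup_base: "subgroup (base_group p) (perm_grp (wreath_group p))"
proof (rule group.subgroupI[OF group_W])
  show "base_group p \<subseteq> carrier (perm_grp (wreath_group p))"
    using base_sub_W by (simp add: perm_grp_def)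
  show "base_group p \<noteq> {}" using id_base by blast
  fix a b assume a: "a \<in> base_group p"
  then obtain y where y: "y \<in> base_group p" "y \<circ> a = id" using base_inv by blast
  have "inv\<^bsub>perm_grp (wreath_group p)\<^esub> a = y"
    by (rule group.inv_equality[OF group_W]) (use y a base_sub_W in \<open>auto simp: perm_grp_def\<close>)
  then show "inv\<^bsub>perm_grp (wreath_group p)\<^esub> a \<in> base_group p" using y by simp
  assume "b \<in> base_group p"
  then show "a \<otimes>\<^bsub>perm_grp (wreath_group p)\<^esub> b \<in> base_group p"
    using a base_closed by (simp add: perm_grp_def)
qed

lemma not_dvd1: "\<not> p dvd 1" using p_pos by (simp add: zdvd_not_zless)
lemma QR1: "QuadRes p 1" unfolding QuadRes_def by (rule exI[of _ 1]) simp
lemma hm1_in: "hm p 1 b \<in> Hmaps p" using hm_in[OF not_dvd1 QR1] .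

lemma Omega_mem: "(x, y) \<in> Omega p \<longleftrightarrow> x \<in> Fp p \<and> y \<in> Fp p"
  by (simp add: Omega_def)

lemma Fp_mod: "x \<in> Fp p \<Longrightarrow> x mod p = x" by (simp add: Fp_def)
lemma mod_Fp: "x mod p \<in> Fp p" using p_pos by (simp add: Fp_def)

lemma finite_Omega: "finite (Omega p)" by (simp add: Omega_def Fp_def)

lemma card_Fp: "card (Fp p) = nat p" by (simp add: Fp_def)

lemma card_Omega: "card (Omega p) = nat (p^2)"
  using p_pos by (simp add: Omega_def card_cartesian_product card_Fp power2_eq_square nat_mult_distrib)

lemma W_maps: "g \<in> wreath_group p \<Longrightarrow> z \<in> Omega p \<Longrightarrow> g z \<in> Omega p"
  unfolding W_eq
proof (elim UnE)
  assume "g \<in> base_group p" "z \<in> Omega p"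
  then show "g z \<in> Omega p"
    by (elim base_E) (cases z, auto simp: coordwise_def Omega_mem Hmaps_range)
next
  assume g: "g \<in> Sw" and "z \<in> Omega p"
  obtain h1 h2 where h: "h1 \<in> Hmaps p" "h2 \<in> Hmaps p" "g = swapped p h1 h2" using g by (rule Sw_E)
  then show "g z \<in> Omega p" using \<open>z \<in> Omega p\<close>
    by (cases z) (auto simp: swapped_def Omega_mem Hmaps_range)
qed

lemma W_inj: "g \<in> wreath_group p \<Longrightarrow> inj_on g A"
  by (metis W_inv inj_on_id inj_on_imageI2 image_id inj_on_subset subset_UNIV)

lemma W_bij: "g \<in> wreath_group p \<Longrightarrow> bij_betw g (Omega p) (Omega p)"
proof -
  assume g: "g \<in> wreath_group p"
  then obtain y where y: "y \<in> wreath_group p" "y \<circ> g = id" "g \<circ> y = id" using W_inv by blast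
  show ?thesis
  proof (rule bij_betwI[where g = y])
    show "g \<in> Omega p \<rightarrow> Omega p" using W_maps g by blast
    show "y \<in> Omega p \<rightarrow> Omega p" using W_maps y(1) by blast
    show "y (g x) = x" for x using y(2) by (metis comp_apply id_apply)
    show "g (y x) = x" for x using y(3) by (metis comp_apply id_apply)
  qed
qed

definition Blk :: "int \<Rightarrow> int \<Rightarrow> (int \<times> int) set" where
  "Blk l c = {z \<in> Omega p. (fst z + l * snd z) mod p = c}"

definition Part :: "int \<Rightarrow> (int \<times> int) set set" where
  "Part l = Blk l ` Fp p"

lemma Blk_sub: "Blk l c \<subseteq> Omega p" by (auto simp: Blk_def)

lemma card_Blk: assumes c: "c \<in> Fp p" shows "card (Blk l c) = nat p"
proof -
  have "bij_betw (\<lambda>y. ((c - l*y) mod p, y)) (Fp p) (Blk l c)"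
    unfolding bij_betw_def
  proof
    show "inj_on (\<lambda>y. ((c - l*y) mod p, y)) (Fp p)" by (auto simp: inj_on_def)
    show "(\<lambda>y. ((c - l*y) mod p, y)) ` Fp p = Blk l c"
    proof
      show "(\<lambda>y. ((c - l*y) mod p, y)) ` Fp p \<subseteq> Blk l c"
      proof clarify
        fix y assume y: "y \<in> Fp p"
        have "((c - l*y) mod p + l*y) mod p = (c - l*y + l*y) mod p" by (simp add: mod_add_left_eq)
        also have "\<dots> = c" using c by (simp add: Fp_mod)
        finally show "((c - l*y) mod p, y) \<in> Blk l c" using y by (simp add: Blk_def Omega_mem mod_Fp)
      qed
      show "Blk l c \<subseteq> (\<lambda>y. ((c - l*y) mod p, y)) ` Fp p"
      proof
        fix z assume z: "z \<in> Blk l c"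
        obtain x y where xy: "z = (x, y)" by (cases z)
        have x: "x \<in> Fp p" "y \<in> Fp p" and cx: "c = (x + l*y) mod p" using z xy by (auto simp: Blk_def Omega_mem)
        have "(c - l*y) mod p = (x + l*y - l*y) mod p" unfolding cx by (simp add: mod_diff_left_eq)
        also have "\<dots> = x" using x by (simp add: Fp_mod)
        finally show "z \<in> (\<lambda>y. ((c - l*y) mod p, y)) ` Fp p" using xy x by force
      qed
    qed
  qed
  then show ?thesis using card_Fp bij_betw_same_card by metis
qed

lemma Blk_mem: "z \<in> Omega p \<Longrightarrow> z \<in> Blk l ((fst z + l * snd z) mod p)"
  by (simp add: Blk_def)

lemma block_system_Part: "block_system (Omega p) (Part l) (nat p)"
proof -
  have "partition_on (Omega p) (Part l)"
  proof (rule partition_onI)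
    show "\<Union> (Part l) = Omega p"
      unfolding Part_def using Blk_sub Blk_mem mod_Fp by blast
    fix B C assume "B \<in> Part l" "C \<in> Part l" "B \<noteq> C"
    then show "disjnt B C" unfolding Part_def disjnt_def Blk_def by auto
  next
    show "{} \<notin> Part l"
    proof
      assume "{} \<in> Part l"
      then obtain c where "c \<in> Fp p" "Blk l c = {}" unfolding Part_def by auto
      then show False using card_Blk[of c l] p_pos by simp
    qed
  qed
  moreover have "nat p < nat (p^2)" using p_pos by (simp add: power2_eq_square)
  ultimately show ?thesis unfolding block_system_def Part_def
    using card_Blk p_pos card_Omega by auto
qed

lemma preserves_Part:
  assumes g: "g \<in> wreath_group p"
    and h: "\<And>c. c \<in> Fp p \<Longrightarrow> \<exists>c'\<in>Fp p. \<forall>z\<in>Blk l c. g z \<in> Blk l c'"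
  shows "preserves g (Part l)"
  unfolding preserves_def Part_def
proof
  fix B assume "B \<in> Blk l ` Fp p"
  then obtain c where c: "c \<in> Fp p" "B = Blk l c" by auto
  obtain c' where c': "c' \<in> Fp p" "\<forall>z\<in>Blk l c. g z \<in> Blk l c'" using h[OF c(1)] by blast
  have "g ` Blk l c = Blk l c'"
  proof (rule card_subset_eq)
    show "finite (Blk l c')" using Blk_sub finite_Omega finite_subset by blast
    show "g ` Blk l c \<subseteq> Blk l c'" using c' by blast
    show "card (g ` Blk l c) = card (Blk l c')"
      using card_Blk[OF c(1)] card_Blk[OF c'(1)] card_image[OF W_inj[OF g]] by simp
  qed
  then show "g ` B \<in> Blk l ` Fp p" using c c' by simp
qed

lemma base_preserves: "g \<in> base_group p \<Longrightarrow> preserves g (Part 0)"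
proof -
  assume g: "g \<in> base_group p"
  obtain h1 h2 where h: "h1 \<in> Hmaps p" "h2 \<in> Hmaps p" "g = coordwise p h1 h2" using g by (rule base_E)
  show ?thesis
  proof (rule preserves_Part)
    show "g \<in> wreath_group p" using g base_sub_W by blast
    fix c assume c: "c \<in> Fp p"
    show "\<exists>c'\<in>Fp p. \<forall>z\<in>Blk 0 c. g z \<in> Blk 0 c'"
    proof (intro bexI ballI)
      show "h1 c \<in> Fp p" using Hmaps_range h(1) .
      fix z assume "z \<in> Blk 0 c"
      then obtain x y where "z = (x,y)" "x \<in> Fp p" "y \<in> Fp p" "x = c"
        by (cases z) (auto simp: Blk_def Omega_mem Fp_mod)
      then show "g z \<in> Blk 0 (h1 c)" using h
        by (auto simp: Blk_def coordwise_def Omega_mem Hmaps_range Fp_mod)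
    qed
  qed
qed

lemma sqrt_ratio:
  assumes "\<not> p dvd a1" "QuadRes p a1" "\<not> p dvd a2" "QuadRes p a2"
  shows "\<exists>l. p dvd a1 - l^2 * a2"
proof -
  obtain y1 where y1: "p dvd a1 - y1^2" using assms(2) unfolding QuadRes_def cong_iff_dvd_diff
    by (metis dvd_minus_iff minus_diff_eq)
  obtain y2 where y2: "p dvd y2^2 - a2" using assms(4) unfolding QuadRes_def cong_iff_dvd_diff by blast
  have ny2: "\<not> p dvd y2"
  proof
    assume "p dvd y2"
    then have "p dvd y2^2" by (simp add: power2_eq_square)
    then have "p dvd y2^2 - (y2^2 - a2)" using y2 by (rule dvd_diff)
    then show False using assms(3) by simp
  qed
  have "coprime y2 p" using prime_imp_coprime[OF prime_p ny2] by (simp add: coprime_commute)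
  then obtain w where "[y2*w = 1] (mod p)" using cong_solve_coprime_int by blast
  then have w: "p dvd y2*w - 1" by (simp add: cong_iff_dvd_diff)
  have eq: "a1 - (y1*w)^2 * a2 = (a1 - y1^2) - y1^2 * (y2*w - 1) * (y2*w + 1) + (y1*w)^2 * (y2^2 - a2)"
    by (simp add: algebra_simps power2_eq_square)
  have d1: "p dvd y1^2 * (y2*w - 1) * (y2*w + 1)"
    using dvd_mult2[OF dvd_mult[OF w, of "y1^2"], of "y2*w+1"] .
  have d2: "p dvd (y1*w)^2 * (y2^2 - a2)" using dvd_mult[OF y2, of "(y1*w)^2"] .
  have "p dvd a1 - (y1*w)^2 * a2" unfolding eq using dvd_add[OF dvd_diff[OF y1 d1] d2] .
  then show ?thesis by blast
qed

lemma Sw_preserves: "g \<in> Sw \<Longrightarrow> \<exists>l. preserves g (Part l)"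
proof -
  assume g: "g \<in> Sw"
  obtain h1 h2 where h: "h1 \<in> Hmaps p" "h2 \<in> Hmaps p" "g = swapped p h1 h2" using g by (rule Sw_E)
  obtain a1 b1 where h1: "h1 = hm p a1 b1" "\<not> p dvd a1" "QuadRes p a1" using h(1) by (rule Hmaps_E)
  obtain a2 b2 where h2: "h2 = hm p a2 b2" "\<not> p dvd a2" "QuadRes p a2" using h(2) by (rule Hmaps_E)
  obtain l where l: "p dvd a1 - l^2 * a2" using sqrt_ratio h1 h2 by blast
  have gW: "g \<in> wreath_group p" using g unfolding W_eq by (rule UnI2)
  have "preserves g (Part l)"
  proof (rule preserves_Part[OF gW])
    fix t assume t: "t \<in> Fp p"
    show "\<exists>c'\<in>Fp p. \<forall>z\<in>Blk l t. g z \<in> Blk l c'"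
    proof (intro bexI ballI)
      show "(l*a2*t + b1 + l*b2) mod p \<in> Fp p" by (rule mod_Fp)
      fix z assume "z \<in> Blk l t"
      then obtain x y where xy: "z = (x,y)" "x \<in> Fp p" "y \<in> Fp p" "t = (x + l*y) mod p"
        by (cases z) (auto simp: Blk_def Omega_mem)
      have gz: "g z = ((a1*y+b1) mod p, (a2*x+b2) mod p)"
        using xy h h1 h2 by (simp add: swapped_def Omega_mem hm_def)
      have e1: "((a1*y+b1) mod p + l*((a2*x+b2) mod p)) mod p = (a1*y+b1 + l*(a2*x+b2)) mod p"
      proof -
        have "((a1*y+b1) mod p + l*((a2*x+b2) mod p)) mod p = (a1*y+b1 + l*((a2*x+b2) mod p)) mod p"
          by (simp add: mod_add_left_eq)
        also have "\<dots> = (a1*y+b1 + l*(a2*x+b2)) mod p"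
          by (metis mod_add_right_eq mod_mult_right_eq)
        finally show ?thesis .
      qed
      have e2: "(l*a2*t + b1 + l*b2) mod p = (l*a2*(x + l*y) + b1 + l*b2) mod p"
      proof -
        have "p dvd (x + l*y) mod p - (x + l*y)" by (simp add: mod_eq_dvd_iff[symmetric])
        then have "p dvd l*a2*((x + l*y) mod p - (x + l*y))" by (rule dvd_mult)
        moreover have "l*a2*((x + l*y) mod p - (x + l*y)) = (l*a2*((x + l*y) mod p) + b1 + l*b2) - (l*a2*(x + l*y) + b1 + l*b2)"
          by (simp add: algebra_simps)
        ultimately show ?thesis unfolding xy(4) by (simp add: mod_eq_dvd_iff)
      qed
      have "(a1*y+b1 + l*(a2*x+b2)) - (l*a2*(x + l*y) + b1 + l*b2) = y * (a1 - l^2*a2)"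
        by (simp add: algebra_simps power2_eq_square)
      then have "p dvd (a1*y+b1 + l*(a2*x+b2)) - (l*a2*(x + l*y) + b1 + l*b2)" using l by simp
      then have "(a1*y+b1 + l*(a2*x+b2)) mod p = (l*a2*(x + l*y) + b1 + l*b2) mod p"
        by (simp add: mod_eq_dvd_iff)
      then show "g z \<in> Blk l ((l*a2*t + b1 + l*b2) mod p)"
        using e1 e2 gz by (simp add: Blk_def Omega_mem mod_Fp)
    qed
  qed
  then show ?thesis by blast
qed

lemma W_imprim: "g \<in> wreath_group p \<Longrightarrow> imprimitive_perm (Omega p) g"
  unfolding imprimitive_perm_def W_eq
proof (elim UnE)
  assume "g \<in> base_group p"
  then show "\<exists>P m. block_system (Omega p) P m \<and> preserves g P"
    using base_preserves block_system_Part by blast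
next
  assume "g \<in> Sw"
  then show "\<exists>P m. block_system (Omega p) P m \<and> preserves g P"
    using Sw_preserves block_system_Part by blast
qed

lemma base_trans: "transitive_on (Omega p) (base_group p)"
  unfolding transitive_on_def
proof (intro ballI)
  fix z z' assume z: "z \<in> Omega p" and z': "z' \<in> Omega p"
  obtain x y where xy: "z = (x,y)" "x \<in> Fp p" "y \<in> Fp p" using z by (cases z) (auto simp: Omega_mem)
  obtain x' y' where xy': "z' = (x',y')" "x' \<in> Fp p" "y' \<in> Fp p" using z' by (cases z') (auto simp: Omega_mem)
  let ?g = "coordwise p (hm p 1 (x' - x)) (hm p 1 (y' - y))"
  have "?g \<in> base_group p" using cw_in hm1_in by blast
  moreover have "?g z = z'" using xy xy' by (simp add: coordwise_def Omega_mem hm_def Fp_mod)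
  ultimately show "\<exists>g\<in>base_group p. g z = z'" by blast
qed

lemma base_imprim: "imprimitive_group (Omega p) (base_group p)"
  unfolding imprimitive_group_def using base_trans base_preserves block_system_Part by blast

lemma W_trans: "transitive_on (Omega p) (wreath_group p)"
  using base_trans base_sub_W unfolding transitive_on_def by blast

lemma tr_W: "coordwise p (hm p 1 u) (hm p 1 v) \<in> wreath_group p"
  using cw_in[OF hm1_in hm1_in] base_sub_W by blast

lemma tr_app: "(x, y) \<in> Omega p \<Longrightarrow> coordwise p (hm p 1 u) (hm p 1 v) (x, y) = ((x + u) mod p, (y + v) mod p)"
  by (simp add: coordwise_def hm_def)

lemma swE_W: "swapped p E E \<in> wreath_group p"
  unfolding W_eq using sw_in[OF E_in E_in] by (rule UnI2)

lemma swE_app: "(x, y) \<in> Omega p \<Longrightarrow> swapped p E E (x, y) = (y, x)"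
  by (simp add: swapped_def Omega_mem E_id)

lemma not_dvd4: "\<not> p dvd 4"
proof
  assume "p dvd 4"
  then have "p \<le> 4" by (rule zdvd_imp_le) simp
  then show False using p5 by simp
qed

lemma QR4: "QuadRes p 4" unfolding QuadRes_def by (rule exI[of _ 2]) simp

lemma sc_W: "coordwise p (hm p 4 0) E \<in> wreath_group p"
  using cw_in[OF hm_in[OF not_dvd4 QR4] E_in] base_sub_W by blast

lemma sc_app: "(x, y) \<in> Omega p \<Longrightarrow> coordwise p (hm p 4 0) E (x, y) = ((4*x) mod p, y)"
  by (simp add: coordwise_def hm_def Omega_mem Fp_mod)

lemma zero_Fp: "0 \<in> Fp p" using p_pos by (simp add: Fp_def)

lemma W_prim: "\<not> (\<exists>P m. block_system (Omega p) P m \<and> (\<forall>g\<in>wreath_group p. preserves g P))"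
proof
  assume "\<exists>P m. block_system (Omega p) P m \<and> (\<forall>g\<in>wreath_group p. preserves g P)"
  then obtain P m where bs: "block_system (Omega p) P m" and pres: "\<forall>g\<in>wreath_group p. preserves g P"
    by blast
  have part: "partition_on (Omega p) P" and cardB: "\<forall>B\<in>P. card B = m" and m1: "1 < m"
    and mlt: "m < card (Omega p)"
    using bs unfolding block_system_def by auto
  have o: "(0,0) \<in> Omega p" using zero_Fp by (simp add: Omega_mem)
  obtain B where B: "B \<in> P" "(0,0) \<in> B" using partition_onD1[OF part] o by blast
  have BO: "B \<subseteq> Omega p" using partition_onD1[OF part] B(1) by blast
  have key: "g w \<in> B" if g: "g \<in> wreath_group p" and z: "z \<in> B" "g z \<in> B" and w: "w \<in> B" for g z w
  proof -
    have "g ` B \<in> P" using pres g B(1) unfolding preserves_def by blast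
    moreover have "g z \<in> g ` B \<inter> B" using z by blast
    ultimately have "g ` B = B" using disjointD[OF partition_onD2[OF part] _ B(1)] by blast
    then show ?thesis using w by blast
  qed
  have add: "((x + u) mod p, (y + v) mod p) \<in> B" if uv: "(u, v) \<in> B" and xy: "(x, y) \<in> B" for u v x y
  proof -
    have "(u, v) \<in> Omega p" "(x, y) \<in> Omega p" using uv xy BO by auto
    then have "coordwise p (hm p 1 u) (hm p 1 v) (0, 0) = (u, v)"
      "coordwise p (hm p 1 u) (hm p 1 v) (x, y) = ((x + u) mod p, (y + v) mod p)"
      using tr_app o by (auto simp: Omega_mem Fp_mod)
    then show ?thesis using key[OF tr_W[of u v] B(2) _ xy] uv by simp
  qed
  have swp: "(y, x) \<in> B" if xy: "(x, y) \<in> B" for x y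
  proof -
    have "(x, y) \<in> Omega p" using xy BO by auto
    then show ?thesis using key[OF swE_W B(2) _ xy] swE_app[OF o] swE_app B(2) by simp
  qed
  have mult: "((int k * u) mod p, (int k * v) mod p) \<in> B" if uv: "(u, v) \<in> B" for k u v
  proof (induction k)
    case 0 then show ?case using B(2) by simp
  next
    case (Suc k)
    have "((int k * u) mod p + u) mod p = (int (Suc k) * u) mod p"
      "((int k * v) mod p + v) mod p = (int (Suc k) * v) mod p"
      by (simp_all add: mod_add_left_eq algebra_simps mod_add_right_eq)
    then show ?case using add[OF uv Suc.IH] by (simp add: add.commute)
  qed
  have line: "(x, 0) \<in> B" if w: "(w, 0) \<in> B" "w \<in> Fp p" "w \<noteq> 0" and x: "x \<in> Fp p" for w x
  proof -
    have nw: "\<not> p dvd w" using w zdvd_not_zless[of w p] by (auto simp: Fp_def)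
    have "coprime w p" using prime_imp_coprime[OF prime_p nw] by (simp add: coprime_commute)
    then obtain w' where w': "[w * w' = 1] (mod p)" using cong_solve_coprime_int by blast
    define k where "k = nat ((x * w') mod p)"
    have ik: "int k = (x * w') mod p" unfolding k_def using p_pos by simp
    have "(int k * w) mod p = (x * (w * w')) mod p"
    proof -
      have "((x * w') mod p * w) mod p = (x * w' * w) mod p" by (rule mod_mult_left_eq)
      then show ?thesis unfolding ik by (simp add: algebra_simps)
    qed
    also have "\<dots> = (x * 1) mod p" using w' unfolding cong_def by (rule mod_mult_cong[OF refl])
    also have "\<dots> = x" using x by (simp add: Fp_mod)
    finally show ?thesis using mult[OF w(1), of k] by simp
  qed
  have allB: "Omega p \<subseteq> B" if w: "(w, 0) \<in> B" "w \<in> Fp p" "w \<noteq> 0" for w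
  proof
    fix z assume z: "z \<in> Omega p"
    obtain x y where xy: "z = (x, y)" "x \<in> Fp p" "y \<in> Fp p" using z by (cases z) (auto simp: Omega_mem)
    have "(x, 0) \<in> B" "(0, y) \<in> B" using line[OF w xy(2)] swp[OF line[OF w xy(3)]] by auto
    then show "z \<in> B" using add[of x 0 0 y] xy by (simp add: Fp_mod)
  qed
  obtain z where z: "z \<in> B" "z \<noteq> (0,0)"
  proof -
    have fin: "finite B" using BO finite_Omega finite_subset by blast
    have "\<not> B \<subseteq> {(0,0)}"
    proof
      assume "B \<subseteq> {(0,0)}"
      then have "card B \<le> 1" using card_mono[of "{(0,0)}" B] by simp
      then show False using cardB B(1) m1 by auto
    qed
    then show ?thesis using that by blast
  qed
  obtain u v where uv: "z = (u, v)" "u \<in> Fp p" "v \<in> Fp p" using z BO by (cases z) (auto simp: Omega_mem)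
  have "\<exists>w. (w, 0) \<in> B \<and> w \<in> Fp p \<and> w \<noteq> 0"
  proof (cases "v = 0")
    case True
    then show ?thesis using z uv by auto
  next
    case v: False
    show ?thesis
    proof (cases "u = 0")
      case True
      then show ?thesis using swp z uv v by auto
    next
      case u: False
      have uO: "(u, v) \<in> Omega p" using uv by (simp add: Omega_mem)
      have s1: "((4*u) mod p, v) \<in> B"
        using key[OF sc_W B(2) _ z(1)[unfolded uv(1)]] sc_app[OF o] sc_app[OF uO] B(2) by simp
      have ip: "int (nat (p-1)) = p - 1" using p_pos by simp
      have s2: "(((p-1) * u) mod p, ((p-1) * v) mod p) \<in> B"
        using mult[OF z(1)[unfolded uv(1)], of "nat (p-1)"] unfolding ip .
      have s3: "(((4*u) mod p + (p-1) * u mod p) mod p, (v + (p-1)*v mod p) mod p) \<in> B"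
        using add[OF s2 s1] by simp
      have e1: "((4*u) mod p + (p-1) * u mod p) mod p = (3*u) mod p"
      proof -
        have "((4*u) mod p + (p-1) * u mod p) mod p = (4*u + (p-1) * u) mod p" by (simp add: mod_add_eq)
        also have "4*u + (p-1)*u = 3*u + u*p" by (simp add: algebra_simps)
        also have "(3*u + u*p) mod p = (3*u) mod p" by simp
        finally show ?thesis .
      qed
      have e2: "(v + (p-1)*v mod p) mod p = 0"
      proof -
        have "(v + (p-1)*v mod p) mod p = (v + (p-1)*v) mod p" by (simp add: mod_add_right_eq)
        also have "v + (p-1)*v = v*p" by (simp add: algebra_simps)
        finally show ?thesis by simp
      qed
      have "\<not> p dvd 3" using p5 zdvd_not_zless[of 3 p] by auto
      moreover have "\<not> p dvd u" using u uv zdvd_not_zless[of u p] by (auto simp: Fp_def)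
      ultimately have "\<not> p dvd 3*u" using prime_p by (simp add: prime_dvd_mult_iff)
      then have "(3*u) mod p \<noteq> 0" by (simp add: dvd_eq_mod_eq_0)
      then show ?thesis using s3 e1 e2 mod_Fp by auto
    qed
  qed
  then have "Omega p \<subseteq> B" using allB by blast
  then have "B = Omega p" using BO by blast
  then show False using cardB B(1) mlt by simp
qed

lemma W_primitive: "primitive_group (Omega p) (wreath_group p)"
  unfolding primitive_group_def using W_trans W_prim by blast

abbreviation G where "G \<equiv> perm_grp (wreath_group p)"

lemma rcos_eq: "H #>\<^bsub>G\<^esub> x = (\<Union>h\<in>H. {h \<circ> x})"
  by (simp add: r_coset_def perm_grp_def)

lemma lcos_eq: "x <#\<^bsub>G\<^esub> H = (\<Union>h\<in>H. {x \<circ> h})"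
  by (simp add: l_coset_def perm_grp_def)

lemma inv2:
  assumes "k \<in> Hmaps p"
  obtains k' where "k' \<in> Hmaps p" "k' \<circ> k = E" "k \<circ> k' = E"
  using Hmaps_inv[OF assms] by blast

lemma rc_base: "x \<in> base_group p \<Longrightarrow> base_group p #>\<^bsub>G\<^esub> x = base_group p"
proof -
  assume x: "x \<in> base_group p"
  obtain k1 k2 where k: "k1 \<in> Hmaps p" "k2 \<in> Hmaps p" "x = coordwise p k1 k2" using x by (rule base_E)
  obtain k1' where k1': "k1' \<in> Hmaps p" "k1' \<circ> k1 = E" by (rule inv2[OF k(1)])
  obtain k2' where k2': "k2' \<in> Hmaps p" "k2' \<circ> k2 = E" by (rule inv2[OF k(2)])
  show ?thesis unfolding rcos_eq
  proof
    show "(\<Union>h\<in>base_group p. {h \<circ> x}) \<subseteq> base_group p" using base_closed x by blast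
    show "base_group p \<subseteq> (\<Union>h\<in>base_group p. {h \<circ> x})"
    proof
      fix f assume "f \<in> base_group p"
      then obtain f1 f2 where f: "f1 \<in> Hmaps p" "f2 \<in> Hmaps p" "f = coordwise p f1 f2" by (rule base_E)
      have "coordwise p (f1 \<circ> k1') (f2 \<circ> k2') \<circ> x = f"
        using k k1' k2' f by (simp add: cw_cw o_assoc[symmetric] E_right)
      then show "f \<in> (\<Union>h\<in>base_group p. {h \<circ> x})"
        using cw_in[OF Hmaps_comp[OF f(1) k1'(1)] Hmaps_comp[OF f(2) k2'(1)]] by force
    qed
  qed
qed

lemma lc_base: "x \<in> base_group p \<Longrightarrow> x <#\<^bsub>G\<^esub> base_group p = base_group p"
proof -
  assume x: "x \<in> base_group p"
  obtain k1 k2 where k: "k1 \<in> Hmaps p" "k2 \<in> Hmaps p" "x = coordwise p k1 k2" using x by (rule base_E)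
  obtain k1' where k1': "k1' \<in> Hmaps p" "k1 \<circ> k1' = E" by (rule inv2[OF k(1)])
  obtain k2' where k2': "k2' \<in> Hmaps p" "k2 \<circ> k2' = E" by (rule inv2[OF k(2)])
  show ?thesis unfolding lcos_eq
  proof
    show "(\<Union>h\<in>base_group p. {x \<circ> h}) \<subseteq> base_group p" using base_closed x by blast
    show "base_group p \<subseteq> (\<Union>h\<in>base_group p. {x \<circ> h})"
    proof
      fix f assume "f \<in> base_group p"
      then obtain f1 f2 where f: "f1 \<in> Hmaps p" "f2 \<in> Hmaps p" "f = coordwise p f1 f2" by (rule base_E)
      have "x \<circ> coordwise p (k1' \<circ> f1) (k2' \<circ> f2) = f"
        using k k1' k2' f Hmaps_comp by (simp add: cw_cw o_assoc E_left)
      then show "f \<in> (\<Union>h\<in>base_group p. {x \<circ> h})"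
        using cw_in[OF Hmaps_comp[OF k1'(1) f(1)] Hmaps_comp[OF k2'(1) f(2)]] by force
    qed
  qed
qed

lemma rc_sw: "x \<in> Sw \<Longrightarrow> base_group p #>\<^bsub>G\<^esub> x = Sw"
proof -
  assume x: "x \<in> Sw"
  obtain k1 k2 where k: "k1 \<in> Hmaps p" "k2 \<in> Hmaps p" "x = swapped p k1 k2" using x by (rule Sw_E)
  obtain k1' where k1': "k1' \<in> Hmaps p" "k1' \<circ> k1 = E" by (rule inv2[OF k(1)])
  obtain k2' where k2': "k2' \<in> Hmaps p" "k2' \<circ> k2 = E" by (rule inv2[OF k(2)])
  show ?thesis unfolding rcos_eq
  proof
    show "(\<Union>h\<in>base_group p. {h \<circ> x}) \<subseteq> Sw"
    proof
      fix g assume "g \<in> (\<Union>h\<in>base_group p. {h \<circ> x})"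
      then obtain h where h: "h \<in> base_group p" "g = h \<circ> x" by blast
      obtain h1 h2 where hh: "h1 \<in> Hmaps p" "h2 \<in> Hmaps p" "h = coordwise p h1 h2" using h(1) by (rule base_E)
      have "g = swapped p (h1 \<circ> k1) (h2 \<circ> k2)" using h hh k by (simp add: cw_sw)
      then show "g \<in> Sw" using sw_in[OF Hmaps_comp[OF hh(1) k(1)] Hmaps_comp[OF hh(2) k(2)]] by simp
    qed
    show "Sw \<subseteq> (\<Union>h\<in>base_group p. {h \<circ> x})"
    proof
      fix f assume "f \<in> Sw"
      then obtain f1 f2 where f: "f1 \<in> Hmaps p" "f2 \<in> Hmaps p" "f = swapped p f1 f2" by (rule Sw_E)
      have "coordwise p (f1 \<circ> k1') (f2 \<circ> k2') \<circ> x = f"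
        using k k1' k2' f by (simp add: cw_sw o_assoc[symmetric] E_right)
      then show "f \<in> (\<Union>h\<in>base_group p. {h \<circ> x})"
        using cw_in[OF Hmaps_comp[OF f(1) k1'(1)] Hmaps_comp[OF f(2) k2'(1)]] by force
    qed
  qed
qed

lemma lc_sw: "x \<in> Sw \<Longrightarrow> x <#\<^bsub>G\<^esub> base_group p = Sw"
proof -
  assume x: "x \<in> Sw"
  obtain k1 k2 where k: "k1 \<in> Hmaps p" "k2 \<in> Hmaps p" "x = swapped p k1 k2" using x by (rule Sw_E)
  obtain k1' where k1': "k1' \<in> Hmaps p" "k1 \<circ> k1' = E" by (rule inv2[OF k(1)])
  obtain k2' where k2': "k2' \<in> Hmaps p" "k2 \<circ> k2' = E" by (rule inv2[OF k(2)])
  show ?thesis unfolding lcos_eq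
  proof
    show "(\<Union>h\<in>base_group p. {x \<circ> h}) \<subseteq> Sw"
    proof
      fix g assume "g \<in> (\<Union>h\<in>base_group p. {x \<circ> h})"
      then obtain h where h: "h \<in> base_group p" "g = x \<circ> h" by blast
      obtain h1 h2 where hh: "h1 \<in> Hmaps p" "h2 \<in> Hmaps p" "h = coordwise p h1 h2" using h(1) by (rule base_E)
      have "g = swapped p (k1 \<circ> h2) (k2 \<circ> h1)" using h hh k by (simp add: sw_cw)
      then show "g \<in> Sw" using sw_in[OF Hmaps_comp[OF k(1) hh(2)] Hmaps_comp[OF k(2) hh(1)]] by simp
    qed
    show "Sw \<subseteq> (\<Union>h\<in>base_group p. {x \<circ> h})"
    proof
      fix f assume "f \<in> Sw"
      then obtain f1 f2 where f: "f1 \<in> Hmaps p" "f2 \<in> Hmaps p" "f = swapped p f1 f2" by (rule Sw_E)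
      have "x \<circ> coordwise p (k2' \<circ> f2) (k1' \<circ> f1) = f"
        using k k1' k2' f Hmaps_comp by (simp add: sw_cw o_assoc E_left)
      then show "f \<in> (\<Union>h\<in>base_group p. {x \<circ> h})"
        using cw_in[OF Hmaps_comp[OF k2'(1) f(2)] Hmaps_comp[OF k1'(1) f(1)]] by force
    qed
  qed
qed

lemma normal_base: "base_group p \<lhd> G"
  unfolding normal_def normal_axioms_def
proof (intro conjI ballI)
  show "subgroup (base_group p) G" by (rule subgroup_base)
  show "Group.group G" by (rule group_W)
  fix x assume "x \<in> carrier G"
  then have "x \<in> base_group p \<or> x \<in> Sw" by (simp add: perm_grp_def W_eq)
  then show "base_group p #>\<^bsub>G\<^esub> x = x <#\<^bsub>G\<^esub> base_group p"
  proof (elim disjE)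
    assume "x \<in> base_group p"
    then show ?thesis by (simp only: rc_base lc_base)
  next
    assume "x \<in> Sw"
    then show ?thesis by (simp only: rc_sw lc_sw)
  qed
qed

lemma id_notin_Sw: "id \<notin> Sw"
proof
  assume "id \<in> Sw"
  then obtain f1 f2 where f: "f1 \<in> Hmaps p" "f2 \<in> Hmaps p" "id = swapped p f1 f2" by (rule Sw_E)
  have o1: "(0, 1) \<in> Omega p" "(1, 1) \<in> Omega p" using p_pos by (auto simp: Omega_mem Fp_def)
  have "swapped p f1 f2 (0, 1) = (0, 1)" "swapped p f1 f2 (1, 1) = (1, 1)" unfolding f(3)[symmetric] by simp_all
  then have "f1 1 = 0" "f1 1 = 1" using o1 by (simp_all add: swapped_def)
  then show False by simp
qed

lemma card2: "a \<noteq> b \<Longrightarrow> card {a, b} = 2" by simp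

lemma card_rcosets: "card (rcosets\<^bsub>G\<^esub> (base_group p)) = 2"
proof -
  have swE: "swapped p E E \<in> Sw" using sw_in[OF E_in E_in] .
  have r: "rcosets\<^bsub>G\<^esub> (base_group p) = {base_group p, Sw}"
  proof
    show "rcosets\<^bsub>G\<^esub> (base_group p) \<subseteq> {base_group p, Sw}"
    proof
      fix C assume "C \<in> rcosets\<^bsub>G\<^esub> (base_group p)"
      then obtain a where a: "a \<in> wreath_group p" "C = base_group p #>\<^bsub>G\<^esub> a"
        unfolding RCOSETS_def by (auto simp: perm_grp_def)
      then have "a \<in> base_group p \<or> a \<in> Sw" by (simp add: W_eq)
      then show "C \<in> {base_group p, Sw}"
      proof (elim disjE)
        assume "a \<in> base_group p"
        then have "C = base_group p" using a(2) rc_base by simp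
        then show ?thesis by (simp only: insertI1)
      next
        assume "a \<in> Sw"
        then have "C = Sw" using a(2) rc_sw by simp
        then show ?thesis by (simp only: insertI1 insertI2)
      qed
    qed
    show "{base_group p, Sw} \<subseteq> rcosets\<^bsub>G\<^esub> (base_group p)"
    proof -
      have "base_group p \<in> rcosets\<^bsub>G\<^esub> (base_group p)"
        unfolding RCOSETS_def using rc_base[OF id_base] id_W by (force simp: perm_grp_def)
      moreover have "Sw \<in> rcosets\<^bsub>G\<^esub> (base_group p)"
      proof -
        have c: "swapped p E E \<in> carrier G" unfolding perm_grp_def using swE_W by simp
        have r: "base_group p #>\<^bsub>G\<^esub> swapped p E E = Sw" using rc_sw[OF swE] .
        show ?thesis unfolding RCOSETS_def by (rule UN_I[OF c]) (simp only: r singletonI)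
      qed
      ultimately show ?thesis by (simp only: insert_subset empty_subsetI simp_thms)
    qed
  qed
  have ne: "base_group p \<noteq> Sw"
  proof
    assume eq: "base_group p = Sw"
    have "id \<in> Sw" using id_base unfolding eq .
    with id_notin_Sw show False by (rule notE)
  qed
  show ?thesis unfolding r by (rule card2[OF ne])
qed

lemma mainTheorem8_loc:
  "group (perm_grp (wreath_group p))
    \<and> (\<forall>g\<in>wreath_group p. bij_betw g (Omega p) (Omega p))
    \<and> card (Omega p) = nat (p ^ 2)
    \<and> primitive_group (Omega p) (wreath_group p)
    \<and> (\<forall>g\<in>wreath_group p. imprimitive_perm (Omega p) g)
    \<and> base_group p \<lhd> perm_grp (wreath_group p)
    \<and> card (rcosets\<^bsub>perm_grp (wreath_group p)\<^esub> (base_group p)) = 2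
    \<and> imprimitive_group (Omega p) (base_group p)"
proof (intro conjI ballI)
  show "group (perm_grp (wreath_group p))" by (rule group_W)
  show "bij_betw g (Omega p) (Omega p)" if "g \<in> wreath_group p" for g using W_bij that .
  show "card (Omega p) = nat (p ^ 2)" by (rule card_Omega)
  show "primitive_group (Omega p) (wreath_group p)" by (rule W_primitive)
  show "imprimitive_perm (Omega p) g" if "g \<in> wreath_group p" for g using W_imprim that .
  show "base_group p \<lhd> perm_grp (wreath_group p)" by (rule normal_base)
  show "card (rcosets\<^bsub>perm_grp (wreath_group p)\<^esub> (base_group p)) = 2" by (rule card_rcosets)
  show "imprimitive_group (Omega p) (base_group p)" by (rule base_imprim)
qed

end

theorem mainTheorem8:
  fixes p :: int
  assumes "Factorial_Ring.prime p" and "p \<ge> 5"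
  shows "group (perm_grp (wreath_group p))
    \<and> (\<forall>g\<in>wreath_group p. bij_betw g (Omega p) (Omega p))
    \<and> card (Omega p) = nat (p ^ 2)
    \<and> primitive_group (Omega p) (wreath_group p)
    \<and> (\<forall>g\<in>wreath_group p. imprimitive_perm (Omega p) g)
    \<and> base_group p \<lhd> perm_grp (wreath_group p)
    \<and> card (rcosets\<^bsub>perm_grp (wreath_group p)\<^esub> (base_group p)) = 2
    \<and> imprimitive_group (Omega p) (base_group p)"
proof -
  interpret setting p using assms by (rule setting.intro)
  show ?thesis by (rule mainTheorem8_loc)
qed

end
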